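(* Let $\Lambda\subseteq\mathbb{Z}^n$ be an antichain lattice and $A$ a generic $\Lambda$-finite set. Then for each $i$, $N_i(A)$ is a $\Lambda$-finite set under the action $N_i(A)\times\Lambda\to N_i(A)$, $(\sigma,\lambda)\mapsto\sigma+\lambda$; i.e. $N_i(A)+\Lambda=N_i(A)$ and $N_i(A)$ consists of finitely many $\Lambda$-orbits.
   Context: Notation: $\le,\ll,\vee$ componentwise on $\mathbb{Z}^n$; an antichain lattice is a subgroup of $\mathbb{Z}^n$ whose distinct elements are pairwise incomparable. $T_\eta=\eta-\mathbb{N}^n$, $T^o_\eta=\{\beta:\beta\ll\eta\}$; the $X$-face ($\emptyset\ne X\subseteq[n]$) of $T_\eta$ is $\{\alpha\in T_\eta:\alpha_i=\eta_i\ \forall i\in X\}$. $A$ is generic if whenever $T^o_\eta\cap A=\emptyset$, each face of $T_\eta$ contains at most one point of $A$. $A$ is $\Lambda$-finite if $A=A+\Lambda$ and there is a finite $A_0\subseteq A$ with $A=A_0+\Lambda$. $N_i(A)$ is the set of strongly neighborly subsets $\sigma\subseteq A$ with $|\sigma|=i+1$, where $\sigma$ is strongly neighborly if $\sigma'\subseteq A$, $\vee\sigma'=\vee\sigma$ imply $\sigma'=\sigma$; $\sigma+\lambda=\{\alpha+\lambda:\alpha\in\sigma\}$. *)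

theory Defs
  imports Main "HOL-Library.Function_Algebras"
begin

text \<open>Points of Z^n are functions 'n \<Rightarrow> int for a finite index type 'n.
  The order on functions is componentwise (le_fun).\<close>

type_synonym 'n zvec = "'n \<Rightarrow> int"

definition strictly_below :: "('n::finite) zvec \<Rightarrow> 'n zvec \<Rightarrow> bool" (infix "\<lless>" 50) where
  "\<beta> \<lless> \<eta> \<longleftrightarrow> (\<forall>i. \<beta> i < \<eta> i)"

definition antichain_lattice :: "('n::finite) zvec set \<Rightarrow> bool" where
  "antichain_lattice L \<longleftrightarrow>
     0 \<in> L \<and> (\<forall>x\<in>L. \<forall>y\<in>L. x + y \<in> L) \<and> (\<forall>x\<in>L. - x \<in> L) \<and>
     (\<forall>x\<in>L. \<forall>y\<in>L. x \<noteq> y \<longrightarrow> \<not> x \<le> y)"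

definition T_cone :: "('n::finite) zvec \<Rightarrow> 'n zvec set" where
  "T_cone \<eta> = {\<alpha>. \<alpha> \<le> \<eta>}"

definition T_open :: "('n::finite) zvec \<Rightarrow> 'n zvec set" where
  "T_open \<eta> = {\<beta>. \<beta> \<lless> \<eta>}"

definition face :: "('n::finite) zvec \<Rightarrow> 'n set \<Rightarrow> 'n zvec set" where
  "face \<eta> X = {\<alpha> \<in> T_cone \<eta>. \<forall>i\<in>X. \<alpha> i = \<eta> i}"

definition generic :: "('n::finite) zvec set \<Rightarrow> bool" where
  "generic A \<longleftrightarrow> (\<forall>\<eta>. T_open \<eta> \<inter> A = {} \<longrightarrow>
      (\<forall>X. X \<noteq> {} \<longrightarrow> (\<forall>\<alpha>\<in>face \<eta> X \<inter> A. \<forall>\<beta>\<in>face \<eta> X \<inter> A. \<alpha> = \<beta>)))"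

definition translate :: "('n::finite) zvec set \<Rightarrow> 'n zvec \<Rightarrow> 'n zvec set" where
  "translate \<sigma> l = (\<lambda>\<alpha>. \<alpha> + l) ` \<sigma>"

definition Lambda_finite :: "('n::finite) zvec set \<Rightarrow> 'n zvec set \<Rightarrow> bool" where
  "Lambda_finite L A \<longleftrightarrow>
     {a + l | a l. a \<in> A \<and> l \<in> L} = A \<and>
     (\<exists>A0. finite A0 \<and> A0 \<subseteq> A \<and> A = {a + l | a l. a \<in> A0 \<and> l \<in> L})"

definition join :: "('n::finite) zvec set \<Rightarrow> 'n zvec" where
  "join \<sigma> = (\<lambda>i. Max ((\<lambda>a. a i) ` \<sigma>))"

definition strongly_neighborly :: "('n::finite) zvec set \<Rightarrow> 'n zvec set \<Rightarrow> bool" where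
  "strongly_neighborly A \<sigma> \<longleftrightarrow> \<sigma> \<subseteq> A \<and> finite \<sigma> \<and> \<sigma> \<noteq> {} \<and>
     (\<forall>\<sigma>'. \<sigma>' \<subseteq> A \<and> finite \<sigma>' \<and> \<sigma>' \<noteq> {} \<and> join \<sigma>' = join \<sigma> \<longrightarrow> \<sigma>' = \<sigma>)"

definition N_faces :: "nat \<Rightarrow> ('n::finite) zvec set \<Rightarrow> 'n zvec set set" where
  "N_faces i A = {\<sigma>. strongly_neighborly A \<sigma> \<and> card \<sigma> = i + 1}"

end

theory Submission
  imports Defs "HOL-Library.Ramsey"
begin


lemma no_strict_decr:
  fixes h :: "nat \<Rightarrow> nat"
  assumes inf: "infinite Y" and dec: "\<forall>x\<in>Y. \<forall>y\<in>Y. x < y \<longrightarrow> h y < h x"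
  shows False
proof -
  obtain x0 where x0: "x0 \<in> Y" using inf by (metis ex_in_conv finite.emptyI)
  have inf2: "infinite (Y \<inter> {x0<..})"
  proof
    assume "finite (Y \<inter> {x0<..})"
    hence "finite ((Y \<inter> {x0<..}) \<union> {..x0})" by simp
    moreover have "Y \<subseteq> (Y \<inter> {x0<..}) \<union> {..x0}" by auto
    ultimately show False using inf finite_subset by blast
  qed
  have inj: "inj_on h (Y \<inter> {x0<..})"
    by (rule inj_onI) (metis IntD1 dec less_irrefl linorder_neqE_nat)
  have "h ` (Y \<inter> {x0<..}) \<subseteq> {..<h x0}" using dec x0 by auto
  hence "finite (h ` (Y \<inter> {x0<..}))" using finite_subset by blast
  thus False using inf2 inj finite_imageD by blast
qed

lemma dickson_idx:
  fixes g :: "nat \<Rightarrow> 'n \<Rightarrow> nat"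
  assumes "finite I"
  shows "infinite Z \<Longrightarrow> \<exists>Y\<subseteq>Z. infinite Y \<and> (\<forall>x\<in>Y. \<forall>y\<in>Y. x < y \<longrightarrow> (\<forall>c\<in>I. g x c \<le> g y c))"
  using assms
proof (induction I arbitrary: Z rule: finite_induct)
  case empty
  then show ?case by blast
next
  case (insert c I)
  obtain Y where Y: "Y \<subseteq> Z" "infinite Y" "\<forall>x\<in>Y. \<forall>y\<in>Y. x < y \<longrightarrow> (\<forall>c\<in>I. g x c \<le> g y c)"
    using insert by blast
  define f where "f = (\<lambda>X::nat set. if g (Min X) c \<le> g (Max X) c then 0 else (1::nat))"
  have "\<forall>x\<in>Y. \<forall>y\<in>Y. x \<noteq> y \<longrightarrow> f {x, y} < 2" unfolding f_def by auto
  from Ramsey2[OF Y(2) this] obtain Y' t where Y': "Y' \<subseteq> Y" "infinite Y'" "t < 2"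
    "\<forall>x\<in>Y'. \<forall>y\<in>Y'. x\<noteq>y \<longrightarrow> f {x, y} = t" by blast
  have mm: "x < y \<Longrightarrow> Min {x,y} = x \<and> Max {x,y} = y" for x y :: nat by auto
  show ?case
  proof (cases "t = 0")
    case True
    have "\<forall>x\<in>Y'. \<forall>y\<in>Y'. x < y \<longrightarrow> g x c \<le> g y c"
    proof (intro ballI impI)
      fix x y assume "x \<in> Y'" "y \<in> Y'" "x < y"
      hence "f {x,y} = 0" using Y'(4) True by auto
      thus "g x c \<le> g y c" using mm[OF \<open>x<y\<close>] unfolding f_def by (auto split: if_splits)
    qed
    thus ?thesis using Y Y' by (intro exI[of _ Y']) blast
  next
    case False
    have "\<forall>x\<in>Y'. \<forall>y\<in>Y'. x < y \<longrightarrow> g y c < g x c"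
    proof (intro ballI impI)
      fix x y assume "x \<in> Y'" "y \<in> Y'" "x < y"
      hence "f {x,y} = t" using Y'(4) by auto
      thus "g y c < g x c" using mm[OF \<open>x<y\<close>] False unfolding f_def by (auto split: if_splits)
    qed
    from no_strict_decr[OF Y'(2) this] show ?thesis ..
  qed
qed

lemma dickson_set:
  fixes V :: "('n::finite \<Rightarrow> int) set"
  assumes "infinite V" "\<forall>v\<in>V. 0 \<le> v"
  shows "\<exists>v\<in>V. \<exists>w\<in>V. v \<noteq> w \<and> v \<le> w"
proof -
  have "\<exists>f::nat \<Rightarrow> _. inj f \<and> range f \<subseteq> V" using assms(1) by (simp only: infinite_iff_countable_subset)
  then obtain g :: "nat \<Rightarrow> _" where g: "inj g" "range g \<subseteq> V" by blast
  have nn: "0 \<le> g k c" for k c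
  proof -
    have "g k \<in> V" using g(2) by blast
    hence "0 \<le> g k" using assms(2) by blast
    hence "(0::'n \<Rightarrow> int) c \<le> g k c" by (rule le_funD)
    thus ?thesis by simp
  qed
  have "\<exists>Y\<subseteq>(UNIV::nat set). infinite Y \<and> (\<forall>x\<in>Y. \<forall>y\<in>Y. x < y \<longrightarrow> (\<forall>c\<in>(UNIV::'n set). nat (g x c) \<le> nat (g y c)))"
    by (rule dickson_idx[OF finite_UNIV infinite_UNIV_nat])
  then obtain Y where Y: "infinite Y" "\<forall>x\<in>Y. \<forall>y\<in>Y. x < y \<longrightarrow> (\<forall>c\<in>(UNIV::'n set). nat (g x c) \<le> nat (g y c))"
    by blast
  obtain x where x: "x \<in> Y" using Y(1) by (metis ex_in_conv finite.emptyI)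
  have "infinite (Y - {..x})" using Y(1) by simp
  then obtain y where y: "y \<in> Y - {..x}" by (metis ex_in_conv finite.emptyI)
  hence y': "y \<in> Y" "x < y" by auto
  have "g x \<le> g y"
  proof (rule le_funI)
    fix c
    have "nat (g x c) \<le> nat (g y c)" using Y(2) x y' by blast
    thus "g x c \<le> g y c" using nn[of x c] nn[of y c] by simp
  qed
  moreover have "g x \<noteq> g y" using g(1) y'(2) by (metis inj_eq less_irrefl)
  moreover have "g x \<in> V" "g y \<in> V" using g(2) by blast+
  ultimately show ?thesis by blast
qed

lemma translate_add: "translate (translate s a) b = translate s (a + b)"
  unfolding translate_def by (auto simp: image_image add.assoc)

lemma translate_0: "translate s 0 = s"
  unfolding translate_def by simp

lemma join_ge: "finite s \<Longrightarrow> a \<in> s \<Longrightarrow> a \<le> join s"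
  unfolding join_def le_fun_def by auto

lemma join_translate:
  assumes "finite s" "s \<noteq> {}"
  shows "join (translate s l) = join s + l"
proof
  fix c
  have "Max ((\<lambda>a. a c) ` (\<lambda>\<alpha>. \<alpha> + l) ` s) = Max ((\<lambda>a. a c) ` s) + l c"
  proof (rule Max_eqI)
    show "finite ((\<lambda>a. a c) ` (\<lambda>\<alpha>. \<alpha> + l) ` s)" using assms by simp
    show "y \<le> Max ((\<lambda>a. a c) ` s) + l c" if "y \<in> (\<lambda>a. a c) ` (\<lambda>\<alpha>. \<alpha> + l) ` s" for y
      using that assms by auto
    have "Max ((\<lambda>a. a c) ` s) \<in> (\<lambda>a. a c) ` s" using assms by (intro Max_in) auto
    then show "Max ((\<lambda>a. a c) ` s) + l c \<in> (\<lambda>a. a c) ` (\<lambda>\<alpha>. \<alpha> + l) ` s" by force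
  qed
  thus "join (translate s l) c = (join s + l) c" unfolding join_def translate_def by simp
qed

lemma join_union:
  assumes "finite s" "finite t" "t \<noteq> {}" "\<forall>a\<in>s. a \<le> join t"
  shows "join (s \<union> t) = join t"
proof
  fix c
  have "Max ((\<lambda>a. a c) ` (s \<union> t)) = Max ((\<lambda>a. a c) ` t)"
  proof (rule Max_eqI)
    show "finite ((\<lambda>a. a c) ` (s \<union> t))" using assms by simp
    show "y \<le> Max ((\<lambda>a. a c) ` t)" if "y \<in> (\<lambda>a. a c) ` (s \<union> t)" for y
      using that assms by (auto simp: join_def le_fun_def)
    have "Max ((\<lambda>a. a c) ` t) \<in> (\<lambda>a. a c) ` t" using assms by (intro Max_in) auto
    then show "Max ((\<lambda>a. a c) ` t) \<in> (\<lambda>a. a c) ` (s \<union> t)" by auto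
  qed
  thus "join (s \<union> t) c = join t c" unfolding join_def by simp
qed

lemma translate_N:
  assumes L: "antichain_lattice L" and AL: "Lambda_finite L A"
    and s: "s \<in> N_faces i A" and l: "l \<in> L"
  shows "translate s l \<in> N_faces i A"
proof -
  have Aclosed: "a \<in> A \<Longrightarrow> m \<in> L \<Longrightarrow> a + m \<in> A" for a m
    using AL unfolding Lambda_finite_def by blast
  have ml: "- l \<in> L" using L l unfolding antichain_lattice_def by blast
  have sn: "s \<subseteq> A" "finite s" "s \<noteq> {}"
    "\<And>s'. s' \<subseteq> A \<Longrightarrow> finite s' \<Longrightarrow> s' \<noteq> {} \<Longrightarrow> join s' = join s \<Longrightarrow> s' = s"
    and cs: "card s = i + 1"
    using s unfolding N_faces_def strongly_neighborly_def by blast+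
  have sub: "translate s l \<subseteq> A" using sn(1) Aclosed l unfolding translate_def by auto
  have card: "card (translate s l) = i + 1"
    unfolding translate_def using cs by (subst card_image) (auto intro: inj_onI)
  have uniq: "s' = translate s l" if "s' \<subseteq> A" "finite s'" "s' \<noteq> {}" "join s' = join (translate s l)" for s'
  proof -
    have "a - l \<in> A" if "a \<in> A" for a using Aclosed[OF that ml] by simp
    hence "translate s' (-l) \<subseteq> A" using that(1) unfolding translate_def by auto
    moreover have "finite (translate s' (-l))" "translate s' (-l) \<noteq> {}"
      using that unfolding translate_def by auto
    moreover have "join (translate s' (-l)) = join s"
      using that join_translate[OF that(2,3), of "-l"] join_translate[OF sn(2,3), of l] by simp
    ultimately have "translate s' (-l) = s" using sn(4) by blast
    hence "translate (translate s' (-l)) l = translate s l" by simp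
    thus ?thesis by (simp add: translate_add translate_0)
  qed
  have "finite (translate s l)" "translate s l \<noteq> {}" using sn(2,3) unfolding translate_def by auto
  thus ?thesis using sub card uniq unfolding N_faces_def strongly_neighborly_def by blast
qed

lemma NfD:
  assumes "s \<in> N_faces i A"
  shows "s \<subseteq> A" "finite s" "s \<noteq> {}" "card s = i + 1"
    "\<And>s'. s' \<subseteq> A \<Longrightarrow> finite s' \<Longrightarrow> s' \<noteq> {} \<Longrightarrow> join s' = join s \<Longrightarrow> s' = s"
proof -
  have sn: "strongly_neighborly A s" and c: "card s = i + 1" using assms by (simp_all add: N_faces_def)
  have d: "s \<subseteq> A" "finite s" "s \<noteq> {}"
    "\<forall>\<sigma>'. \<sigma>' \<subseteq> A \<and> finite \<sigma>' \<and> \<sigma>' \<noteq> {} \<and> join \<sigma>' = join s \<longrightarrow> \<sigma>' = s"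
    using sn unfolding strongly_neighborly_def by simp_all
  show "s \<subseteq> A" "finite s" "s \<noteq> {}" "card s = i + 1" by (fact d(1), fact d(2), fact d(3), fact c)
  show "s' = s" if "s' \<subseteq> A" "finite s'" "s' \<noteq> {}" "join s' = join s" for s'
    using d(4) that by blast
qed

lemma finite_containing:
  assumes "\<alpha> \<in> A"
  shows "finite {s \<in> N_faces i A. \<alpha> \<in> s}"
proof (rule ccontr)
  let ?S = "{s \<in> N_faces i A. \<alpha> \<in> s}"
  let ?f = "\<lambda>s. join s - \<alpha>"
  assume inf: "infinite ?S"
  have inj: "inj_on ?f ?S"
  proof (rule inj_onI)
    fix s t assume a: "s \<in> ?S" "t \<in> ?S" "join s - \<alpha> = join t - \<alpha>"
    have "join s = join t" using a(3) by simp
    have sN: "s \<in> N_faces i A" and tN: "t \<in> N_faces i A" using a(1,2) by simp_all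
    show "s = t" by (rule NfD(5)[OF tN NfD(1)[OF sN] NfD(2)[OF sN] NfD(3)[OF sN] \<open>join s = join t\<close>])
  qed
  have inf2: "infinite (?f ` ?S)" using inf inj finite_imageD by blast
  have nonneg: "0 \<le> join s - \<alpha>" if "s \<in> ?S" for s
  proof -
    have sN: "s \<in> N_faces i A" and "\<alpha> \<in> s" using that by simp_all
    have "\<alpha> \<le> join s" by (rule join_ge[OF NfD(2)[OF sN] \<open>\<alpha> \<in> s\<close>])
    thus ?thesis by (simp add: le_fun_def)
  qed
  have "\<forall>v\<in>?f ` ?S. 0 \<le> v" using nonneg by blast
  from dickson_set[OF inf2 this] obtain v w where vw: "v \<in> ?f ` ?S" "w \<in> ?f ` ?S" "v \<noteq> w" "v \<le> w"
    by blast
  from vw(1) obtain s where s: "s \<in> ?S" "v = ?f s" by blast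
  from vw(2) obtain t where t: "t \<in> ?S" "w = ?f t" by blast
  have sN: "s \<in> N_faces i A" and tN: "t \<in> N_faces i A" using s(1) t(1) by simp_all
  have jl: "join s \<le> join t" using vw(4) unfolding s(2) t(2) le_fun_def by simp
  have "\<forall>a\<in>s. a \<le> join t"
  proof
    fix a assume "a \<in> s"
    hence "a \<le> join s" by (rule join_ge[OF NfD(2)[OF sN]])
    thus "a \<le> join t" using jl by (rule order_trans)
  qed
  hence j: "join (s \<union> t) = join t" by (rule join_union[OF NfD(2)[OF sN] NfD(2)[OF tN] NfD(3)[OF tN]])
  have "s \<union> t \<subseteq> A" using NfD(1)[OF sN] NfD(1)[OF tN] by blast
  moreover have "finite (s \<union> t)" by (simp add: NfD(2)[OF sN] NfD(2)[OF tN])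
  moreover have "s \<union> t \<noteq> {}" using NfD(3)[OF tN] by blast
  ultimately have "s \<union> t = t" using j by (rule NfD(5)[OF tN])
  hence "s \<subseteq> t" by blast
  moreover have "card s = card t" using NfD(4)[OF sN] NfD(4)[OF tN] by simp
  ultimately have "s = t" by (rule card_subset_eq[OF NfD(2)[OF tN]])
  thus False using vw(3) s(2) t(2) by simp
qed

theorem mainTheorem6:
  fixes L A :: "('n::finite) zvec set" and i :: nat
  assumes "antichain_lattice L" and "generic A" and "Lambda_finite L A"
  shows "{translate \<sigma> l | \<sigma> l. \<sigma> \<in> N_faces i A \<and> l \<in> L} = N_faces i A \<and>
         (\<exists>N0. finite N0 \<and> N0 \<subseteq> N_faces i A \<and>
            N_faces i A = {translate \<sigma> l | \<sigma> l. \<sigma> \<in> N0 \<and> l \<in> L})"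
proof
  have z: "0 \<in> L" using assms(1) unfolding antichain_lattice_def by blast
  have gen: "{translate \<sigma> l | \<sigma> l. \<sigma> \<in> M \<and> l \<in> L} \<subseteq> N_faces i A" if "M \<subseteq> N_faces i A" for M
  proof
    fix x assume "x \<in> {translate \<sigma> l | \<sigma> l. \<sigma> \<in> M \<and> l \<in> L}"
    then obtain \<sigma> l where "x = translate \<sigma> l" "\<sigma> \<in> M" "l \<in> L" by blast
    thus "x \<in> N_faces i A" using translate_N[OF assms(1,3)] that by blast
  qed
  show "{translate \<sigma> l | \<sigma> l. \<sigma> \<in> N_faces i A \<and> l \<in> L} = N_faces i A"
  proof (rule subset_antisym)
    show "{translate \<sigma> l | \<sigma> l. \<sigma> \<in> N_faces i A \<and> l \<in> L} \<subseteq> N_faces i A"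
      using gen by blast
    show "N_faces i A \<subseteq> {translate \<sigma> l | \<sigma> l. \<sigma> \<in> N_faces i A \<and> l \<in> L}"
    proof
      fix s assume "s \<in> N_faces i A"
      moreover have "s = translate s 0" by (simp add: translate_0)
      ultimately show "s \<in> {translate \<sigma> l | \<sigma> l. \<sigma> \<in> N_faces i A \<and> l \<in> L}" using z by blast
    qed
  qed
  obtain A0 where A0: "finite A0" "A0 \<subseteq> A" "A = {a + l | a l. a \<in> A0 \<and> l \<in> L}"
    using assms(3) unfolding Lambda_finite_def by blast
  define N0 where "N0 = (\<Union>\<alpha>\<in>A0. {s \<in> N_faces i A. \<alpha> \<in> s})"
  have fin: "finite N0" unfolding N0_def
  proof (rule finite_UN_I[OF A0(1)])
    fix a assume "a \<in> A0"
    hence "a \<in> A" using A0(2) by blast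
    thus "finite {s \<in> N_faces i A. a \<in> s}" by (rule finite_containing)
  qed
  have sub: "N0 \<subseteq> N_faces i A" unfolding N0_def by auto
  have "N_faces i A \<subseteq> {translate \<sigma> l | \<sigma> l. \<sigma> \<in> N0 \<and> l \<in> L}"
  proof
    fix s assume s: "s \<in> N_faces i A"
    hence "s \<noteq> {}" "s \<subseteq> A" unfolding N_faces_def strongly_neighborly_def by auto
    then obtain b where b: "b \<in> s" "b \<in> A" by blast
    then obtain a l where al: "a \<in> A0" "l \<in> L" "b = a + l" using A0(3) by blast
    have ml: "- l \<in> L" using assms(1) al(2) unfolding antichain_lattice_def by blast
    have s': "translate s (-l) \<in> N_faces i A" using translate_N[OF assms(1,3) s ml] .
    have ab: "a = b + - l" using al(3) by simp
    have "a \<in> translate s (-l)" unfolding translate_def using ab b(1) by (rule image_eqI)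
    hence "translate s (-l) \<in> N0" unfolding N0_def using s' al(1) by blast
    moreover have "s = translate (translate s (-l)) l" by (simp add: translate_add translate_0)
    ultimately show "s \<in> {translate \<sigma> l | \<sigma> l. \<sigma> \<in> N0 \<and> l \<in> L}" using al(2) by blast
  qed
  moreover have "{translate \<sigma> l | \<sigma> l. \<sigma> \<in> N0 \<and> l \<in> L} \<subseteq> N_faces i A"
    using gen[OF sub] .
  ultimately have "N_faces i A = {translate \<sigma> l | \<sigma> l. \<sigma> \<in> N0 \<and> l \<in> L}" by (rule subset_antisym)
  thus "\<exists>N0. finite N0 \<and> N0 \<subseteq> N_faces i A \<and>
            N_faces i A = {translate \<sigma> l | \<sigma> l. \<sigma> \<in> N0 \<and> l \<in> L}"
    using fin sub by blast
qed

end
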